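(* Consider $\mathsf{SGDsub}$ run for $T$ steps with batch parameter $B$. Suppose $B\ge\frac{100\log(T/\delta)}{\epsilon}$, $\epsilon\le c_0$ for a suitable absolute constant $c_0>0$, and $\upsilon=0.9B+\frac{2\log(T/\delta)}{\epsilon}$. Suppose that for every point $Y\in\mathbb{R}^d$, $|\{i\in[B]:q_1(Z_{i,1})\in B_\infty(Y,1/\tau)\}|<B/3$. Then with probability at least $1-\delta/(T e^{\epsilon})$, the AboveThreshold procedure returns $a_1=\bot$.
   Context: $\mathsf{SGDsub}$: users are split into groups $\{Z_{i,t}\}_{t\in[T]}$, $i\in[B]$, each user a set of $m$ data points; with iterates $x_t$, $q_t(Z_{i,t})=\frac1m\sum_{z\in Z_{i,t}}\nabla f(x_{t-1};z)$. Concentration scores $s_t=\frac1B\sum_{i,j\in[B]}\exp(-\tau\|q_t(Z_{i,t})-q_t(Z_{j,t})\|_\infty)$. AboveThreshold with privacy $\epsilon/2$ and threshold $\upsilon$: draw $\hat\upsilon=\upsilon-\mathrm{Lap}(4/\epsilon)$; for $t=1,\dots,T$ draw $\nu_t\sim\mathrm{Lap}(8/\epsilon)$; if $s_t+\nu_t<\hat\upsilon$ output $a_t=\bot$ and halt, else output $a_t=\top$. $\mathrm{Lap}(b)$ is the Laplace distribution of scale $b$. *)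

theory Defs
  imports "HOL-Probability.Probability"
begin

text \<open>Vectors in R^d are represented as functions nat => real; only the
  coordinates 0..d-1 are relevant.\<close>

definition linf_norm :: "nat \<Rightarrow> (nat \<Rightarrow> real) \<Rightarrow> real" where
  "linf_norm d x = (if d = 0 then 0 else Max ((\<lambda>k. \<bar>x k\<bar>) ` {..<d}))"

definition linf_ball :: "nat \<Rightarrow> (nat \<Rightarrow> real) \<Rightarrow> real \<Rightarrow> (nat \<Rightarrow> real) set" where
  "linf_ball d Y r = {x. linf_norm d (x - Y) < r}"

definition sgd_q :: "((nat \<Rightarrow> real) \<Rightarrow> 'z \<Rightarrow> (nat \<Rightarrow> real)) \<Rightarrow> nat \<Rightarrow> (nat \<Rightarrow> real) \<Rightarrow> 'z multiset \<Rightarrow> (nat \<Rightarrow> real)" where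
  "sgd_q gradf m x Zit = (\<lambda>k. sum_mset (image_mset (\<lambda>z. gradf x z k) Zit) / real m)"

definition conc_score :: "nat \<Rightarrow> real \<Rightarrow> nat \<Rightarrow> (nat \<Rightarrow> (nat \<Rightarrow> real)) \<Rightarrow> real" where
  "conc_score d \<tau> B qs =
     (\<Sum>i\<in>{1..B}. \<Sum>j\<in>{1..B}. exp (- \<tau> * linf_norm d (qs i - qs j))) / real B"

definition laplace_density :: "real \<Rightarrow> real \<Rightarrow> real" where
  "laplace_density b x = exp (- \<bar>x\<bar> / b) / (2 * b)"

definition laplace :: "real \<Rightarrow> real measure" where
  "laplace b = density lborel (\<lambda>x. ennreal (laplace_density b x))"

datatype at_answer = Top | Bot

text \<open>First answer a_1 of AboveThreshold, given the score s_1, the threshold upsilon,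
  the threshold noise L (so that hat upsilon = upsilon - L) and the query noise nu_1.\<close>
definition above_threshold_a1 :: "real \<Rightarrow> real \<Rightarrow> real \<Rightarrow> real \<Rightarrow> at_answer" where
  "above_threshold_a1 s1 \<upsilon> L \<nu>1 = (if s1 + \<nu>1 < \<upsilon> - L then Bot else Top)"

end

theory Submission
  imports Defs "HOL-Real_Asymp.Real_Asymp"
begin

lemma laplace_tail_int:
  assumes b: "b > 0" and c: "c \<ge> 0"
  shows "(\<integral>\<^sup>+x. ennreal (laplace_density b x) * indicator {c..} x \<partial>lborel) = ennreal (exp (-c/b)/2)"
proof -
  have "(\<integral>\<^sup>+x. ennreal (laplace_density b x) * indicator {c..} x \<partial>lborel)
      = (\<integral>\<^sup>+x. ennreal (exp (-x/b)/(2*b)) * indicator {c..} x \<partial>lborel)"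
    using c by (intro nn_integral_cong) (auto simp: laplace_density_def indicator_def)
  also have "\<dots> = 0 - (- exp (-c/b)/2)"
  proof (rule nn_integral_FTC_atLeast)
    show "(\<lambda>x. exp (-x/b)/(2*b)) \<in> borel_measurable borel" by measurable
    fix x assume "c \<le> x"
    show "((\<lambda>x. - exp (-x/b)/2) has_real_derivative exp (-x/b)/(2*b)) (at x)"
      using b by (auto intro!: derivative_eq_intros simp: field_simps)
    show "0 \<le> exp (-x/b)/(2*b)" using b by simp
  next
    show "((\<lambda>x. - exp (-x/b)/2) \<longlongrightarrow> 0) at_top"
      using b by real_asymp
  qed
  finally show ?thesis by simp
qed

lemma laplace_dens_meas[measurable]: "laplace_density b \<in> borel_measurable borel"
  unfolding laplace_density_def by measurable

lemma ennreal_half_half: "inverse (2::ennreal) + inverse 2 = 1"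
proof -
  have "ennreal (1/2) + ennreal (1/2) = 1"
    by (simp add: ennreal_plus[symmetric] del: ennreal_plus ennreal_half)
  then show ?thesis by simp
qed

lemma laplace_total:
  assumes b: "b > 0"
  shows "(\<integral>\<^sup>+x. ennreal (laplace_density b x) \<partial>lborel) = 1"
proof -
  let ?g = "\<lambda>x. ennreal (laplace_density b x)"
  have split: "(\<integral>\<^sup>+x. ?g x \<partial>lborel) = (\<integral>\<^sup>+x. ?g x * indicator {0..} x \<partial>lborel) + (\<integral>\<^sup>+x. ?g x * indicator {..<0} x \<partial>lborel)"
    by (subst nn_integral_add[symmetric]) (auto intro!: nn_integral_cong simp: indicator_def)
  have "(\<integral>\<^sup>+x. ?g x * indicator {..<0} x \<partial>lborel) = ennreal \<bar>-1\<bar> * (\<integral>\<^sup>+x. ?g (0 + (-1) * x) * indicator {..<0} (0 + (-1) * x) \<partial>lborel)"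
    by (rule nn_integral_real_affine) auto
  also have "\<dots> = (\<integral>\<^sup>+x. ?g x * indicator {0..} x \<partial>lborel)"
    using AE_lborel_singleton[of "0::real"]
    by (auto intro!: nn_integral_cong_AE elim!: eventually_mono simp: laplace_density_def indicator_def)
  finally show ?thesis unfolding split using laplace_tail_int[OF b, of 0]
    by (simp add: ennreal_half_half)
qed

lemma prob_laplace: "b > 0 \<Longrightarrow> prob_space (laplace b)"
  unfolding laplace_def
  by (rule prob_spaceI) (simp add: emeasure_density laplace_total)

lemma sets_laplace[simp, measurable_cong]: "sets (laplace b) = sets borel"
  unfolding laplace_def by simp

lemma space_laplace[simp]: "space (laplace b) = UNIV"
  unfolding laplace_def by simp

lemma laplace_lower:
  assumes b: "b > 0" and c: "c \<ge> 0"
  shows "measure (laplace b) {..<c} = 1 - exp (-c/b)/2"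
proof -
  interpret prob_space "laplace b" using prob_laplace[OF b] .
  have "emeasure (laplace b) {c..} = ennreal (exp (-c/b)/2)"
    unfolding laplace_def using laplace_tail_int[OF b c]
    by (subst emeasure_density) auto
  then have "measure (laplace b) {c..} = exp (-c/b)/2"
    by (simp add: measure_def)
  moreover have "{..<c} = space (laplace b) - {c..}" by auto
  ultimately show ?thesis using prob_compl[of "{c..}"] by simp
qed

lemma prob_sum_lt:
  assumes b1: "b1 > 0" and b2: "b2 > 0" and t: "t \<ge> 0"
  shows "measure (laplace b1 \<Otimes>\<^sub>M laplace b2) {(L, \<nu>). L + \<nu> < t}
         \<ge> (1 - exp (-(t/2)/b1)/2) * (1 - exp (-(t/2)/b2)/2)"
proof -
  interpret M1: prob_space "laplace b1" using prob_laplace[OF b1] .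
  interpret M2: prob_space "laplace b2" using prob_laplace[OF b2] .
  interpret P: pair_prob_space "laplace b1" "laplace b2" ..
  have meas: "{(L, \<nu>). L + \<nu> < t} \<in> sets (laplace b1 \<Otimes>\<^sub>M laplace b2)"
  proof -
    have "{(L, \<nu>). L + \<nu> < t} = {p \<in> space (laplace b1 \<Otimes>\<^sub>M laplace b2). fst p + snd p < t}"
      by (auto simp: space_pair_measure)
    also have "\<dots> \<in> sets (laplace b1 \<Otimes>\<^sub>M laplace b2)" by measurable
    finally show ?thesis .
  qed
  have "measure (laplace b1 \<Otimes>\<^sub>M laplace b2) ({..<t/2} \<times> {..<t/2})
        = measure (laplace b1) {..<t/2} * measure (laplace b2) {..<t/2}"
    by (simp add: measure_def M2.emeasure_pair_measure_Times enn2real_mult)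
  also have "\<dots> = (1 - exp (-(t/2)/b1)/2) * (1 - exp (-(t/2)/b2)/2)"
    using t by (simp add: laplace_lower b1 b2)
  finally have eq: "measure (laplace b1 \<Otimes>\<^sub>M laplace b2) ({..<t/2} \<times> {..<t/2}) = (1 - exp (-(t/2)/b1)/2) * (1 - exp (-(t/2)/b2)/2)" .
  have "measure (laplace b1 \<Otimes>\<^sub>M laplace b2) ({..<t/2} \<times> {..<t/2}) \<le> measure (laplace b1 \<Otimes>\<^sub>M laplace b2) {(L, \<nu>). L + \<nu> < t}"
    by (rule P.finite_measure_mono[OF _ meas]) auto
  then show ?thesis using eq by simp
qed

lemma linf_nonneg: "d \<ge> 1 \<Longrightarrow> linf_norm d x \<ge> 0"
  unfolding linf_norm_def
  by (auto intro!: order.trans[OF _ Max_ge[of _ "\<bar>x 0\<bar>"]])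

lemma linf_sym: "linf_norm d (x - y) = linf_norm d (y - x)"
  unfolding linf_norm_def by (simp add: abs_minus_commute)

lemma exp_m1_half: "exp (-1::real) \<le> 1/2"
proof -
  have "2 \<le> exp (1::real)" using exp_ge_add_one_self[of 1] by simp
  have "exp (-1::real) = 1 / exp 1" by (simp add: exp_minus inverse_eq_divide)
  also have "\<dots> \<le> 1 / 2" by (rule divide_left_mono) (use \<open>2 \<le> exp (1::real)\<close> in auto)
  finally show ?thesis .
qed

lemma score_bound:
  fixes qs :: "nat \<Rightarrow> nat \<Rightarrow> real"
  assumes d: "d \<ge> 1" and tau: "\<tau> > 0"
    and H: "\<forall>Y. real (card {i\<in>{1..B}. qs i \<in> linf_ball d Y (1/\<tau>)}) < real B / 3"
  shows "conc_score d \<tau> B qs \<le> 2 * real B / 3"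
proof -
  have Bpos: "real B > 0"
  proof -
    have "real (card {i\<in>{1..B}. qs i \<in> linf_ball d (qs 0) (1/\<tau>)}) < real B / 3" using H by blast
    moreover have "0 \<le> real (card {i\<in>{1..B}. qs i \<in> linf_ball d (qs 0) (1/\<tau>)})" by simp
    ultimately show ?thesis by linarith
  qed
  have inner: "(\<Sum>j\<in>{1..B}. exp (- \<tau> * linf_norm d (qs i - qs j))) \<le> 2 * real B / 3" for i
  proof -
    define C where "C = {j\<in>{1..B}. qs j \<in> linf_ball d (qs i) (1/\<tau>)}"
    have hterm: "exp (- \<tau> * linf_norm d (qs i - qs j)) \<le> 1/2 + indicator C j / 2" if j: "j \<in> {1..B}" for j
    proof (cases "j \<in> C")
      case True
      have "0 \<le> \<tau> * linf_norm d (qs i - qs j)" using tau linf_nonneg[OF d] by simp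
      then show ?thesis using True by simp
    next
      case False
      then have "linf_norm d (qs i - qs j) \<ge> 1/\<tau>" using j unfolding C_def linf_ball_def
        by (auto simp: linf_sym[of d "qs i"])
      then have "\<tau> * linf_norm d (qs i - qs j) \<ge> 1" using tau by (simp add: field_simps)
      then have "exp (- \<tau> * linf_norm d (qs i - qs j)) \<le> exp (-1)" by simp
      moreover have "indicator C j = (0::real)" using False by simp
      ultimately show ?thesis using exp_m1_half by linarith
    qed
    have "(\<Sum>j\<in>{1..B}. exp (- \<tau> * linf_norm d (qs i - qs j))) \<le> (\<Sum>j\<in>{1..B}. 1/2 + indicator C j / 2)"
      by (rule sum_mono) (rule hterm)
    also have "\<dots> = real B / 2 + (\<Sum>j\<in>{1..B}. indicator C j) / 2"
      by (simp add: sum.distrib sum_divide_distrib[symmetric])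
    also have "(\<Sum>j\<in>{1..B}. indicator C j :: real) = real (card C)"
    proof -
      have Csub: "{1..B} \<inter> C = C" unfolding C_def by auto
      have "(\<Sum>j\<in>{1..B}. indicator C j :: real) = (\<Sum>j\<in>{1..B} \<inter> C. 1)"
        by (simp add: sum.inter_restrict indicator_def)
      also have "\<dots> = real (card C)" unfolding Csub by simp
      finally show ?thesis .
    qed
    also have "real (card C) < real B / 3" using H unfolding C_def by blast
    finally show ?thesis by linarith
  qed
  have "(\<Sum>i\<in>{1..B}. \<Sum>j\<in>{1..B}. exp (- \<tau> * linf_norm d (qs i - qs j))) \<le> (\<Sum>i\<in>{1..B}. 2 * real B / 3)"
    by (rule sum_mono) (rule inner)
  also have "\<dots> = real B * (2 * real B / 3)" by simp
  finally show ?thesis unfolding conc_score_def using Bpos by (simp add: field_simps)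
qed

theorem lemma3p8:
  shows "\<exists>c0 > (0::real). \<forall>(d::nat) (T::nat) (B::nat) (m::nat) (\<delta>::real) (\<epsilon>::real) (\<tau>::real)
           (\<upsilon>::real) (x0 :: nat \<Rightarrow> real) (Z :: nat \<Rightarrow> nat \<Rightarrow> 'z multiset)
           (gradf :: (nat \<Rightarrow> real) \<Rightarrow> 'z \<Rightarrow> (nat \<Rightarrow> real)).
     d \<ge> 1 \<and> T \<ge> 1 \<and> 0 < \<delta> \<and> \<delta> < 1 \<and> 0 < \<epsilon> \<and> \<epsilon> \<le> c0 \<and> 0 < \<tau> \<and> m \<ge> 1
     \<and> (\<forall>i\<in>{1..B}. size (Z i 1) = m)
     \<and> real B \<ge> 100 * ln (real T / \<delta>) / \<epsilon>
     \<and> \<upsilon> = 0.9 * real B + 2 * ln (real T / \<delta>) / \<epsilon>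
     \<and> (\<forall>Y. real (card {i\<in>{1..B}. sgd_q gradf m x0 (Z i 1) \<in> linf_ball d Y (1/\<tau>)}) < real B / 3)
     \<longrightarrow> measure (laplace (4/\<epsilon>) \<Otimes>\<^sub>M laplace (8/\<epsilon>))
           {(L, \<nu>). above_threshold_a1
                        (conc_score d \<tau> B (\<lambda>i. sgd_q gradf m x0 (Z i 1))) \<upsilon> L \<nu> = Bot}
         \<ge> 1 - \<delta> / (real T * exp \<epsilon>)"
proof (intro exI[of _ "1/100"] conjI allI impI)
  fix d T B m \<delta> \<epsilon> \<tau> \<upsilon> x0 Z gradf
  assume A: "d \<ge> 1 \<and> T \<ge> 1 \<and> 0 < \<delta> \<and> \<delta> < 1 \<and> 0 < \<epsilon> \<and> \<epsilon> \<le> (1/100::real) \<and> 0 < \<tau> \<and> m \<ge> 1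
     \<and> (\<forall>i\<in>{1..B}. size (Z i 1) = m)
     \<and> real B \<ge> 100 * ln (real T / \<delta>) / \<epsilon>
     \<and> \<upsilon> = 0.9 * real B + 2 * ln (real T / \<delta>) / \<epsilon>
     \<and> (\<forall>Y. real (card {i\<in>{1..B}. sgd_q gradf m x0 ((Z :: nat \<Rightarrow> nat \<Rightarrow> 'z multiset) i 1) \<in> linf_ball d Y (1/\<tau>)}) < real B / 3)"
  define qs where "qs = (\<lambda>i. sgd_q gradf m x0 (Z i 1))"
  define s where "s = conc_score d \<tau> B qs"
  define a where "a = ln (real T / \<delta>)"
  define t where "t = \<upsilon> - s"
  have eps: "0 < \<epsilon>" "\<epsilon> \<le> 1/100" using A by auto
  have Tdel: "real T / \<delta> > 1" using A by (simp add: field_simps)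
  have apos: "a > 0" unfolding a_def using Tdel by simp
  have ea: "exp a = real T / \<delta>" unfolding a_def using Tdel by simp
  have rhs: "\<delta> / (real T * exp \<epsilon>) = exp (-(a+\<epsilon>))"
  proof -
    have "exp (-(a+\<epsilon>)) = inverse (exp (a+\<epsilon>))" by (rule exp_minus)
    also have "\<dots> = 1 / (exp a * exp \<epsilon>)" by (simp add: exp_add inverse_eq_divide)
    also have "\<dots> = \<delta> / (real T * exp \<epsilon>)" unfolding ea using A by (simp add: field_simps)
    finally show ?thesis by simp
  qed
  have sb: "s \<le> 2 * real B / 3" unfolding s_def qs_def
    by (rule score_bound) (use A in auto)
  have Bb: "real B \<ge> 100 * a / \<epsilon>" using A a_def by simp
  then have Bb': "\<epsilon> * real B \<ge> 100 * a" using eps by (simp add: field_simps)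
  have tdef: "t = 0.9 * real B + 2 * a / \<epsilon> - s" unfolding t_def a_def using A by simp
  have "\<epsilon> * t \<ge> \<epsilon> * (0.2 * real B + 2 * a / \<epsilon>)"
    using sb eps tdef by (intro mult_left_mono) auto
  moreover have "\<epsilon> * (0.2 * real B + 2 * a / \<epsilon>) = 0.2 * (\<epsilon> * real B) + 2 * a"
    using eps by (simp add: field_simps)
  ultimately have et: "\<epsilon> * t \<ge> 22 * a" using Bb' by linarith
  have t0: "t \<ge> 0" using et apos eps by (smt (verit) zero_le_mult_iff)
  have set_eq: "{(L, \<nu>). above_threshold_a1 (conc_score d \<tau> B (\<lambda>i. sgd_q gradf m x0 (Z i 1))) \<upsilon> L \<nu> = Bot}
       = {(L, \<nu>). L + \<nu> < t}"
    unfolding t_def s_def qs_def above_threshold_a1_def by auto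
  have P: "measure (laplace (4/\<epsilon>) \<Otimes>\<^sub>M laplace (8/\<epsilon>)) {(L, \<nu>). L + \<nu> < t}
       \<ge> (1 - exp (-(t/2)/(4/\<epsilon>))/2) * (1 - exp (-(t/2)/(8/\<epsilon>))/2)"
    using eps t0 by (intro prob_sum_lt) auto
  define v where "v = \<epsilon> * t / 16"
  define p where "p = exp (-v)"
  have e1: "exp (-(t/2)/(4/\<epsilon>)) \<le> p" unfolding p_def v_def
    using eps t0 by (simp add: field_simps)
  have e2: "exp (-(t/2)/(8/\<epsilon>)) = p" unfolding p_def v_def
    using eps by (simp add: field_simps)
  have p01: "0 < p" "p \<le> 1" unfolding p_def v_def using eps t0 by auto
  have prod: "(1 - exp (-(t/2)/(4/\<epsilon>))/2) * (1 - exp (-(t/2)/(8/\<epsilon>))/2) \<ge> (1 - p/2) * (1 - p/2)"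
    unfolding e2 using e1 p01 by (intro mult_right_mono) auto
  have "(1 - p) * (3 - p) \<ge> 0" using p01 by simp
  then have low: "(1 - p/2) * (1 - p/2) \<ge> 1 - p" "(1 - p/2) * (1 - p/2) \<ge> 1/4"
    using p01 by (auto simp: algebra_simps)
  have goal: "(1 - p/2) * (1 - p/2) \<ge> 1 - exp (-(a+\<epsilon>))"
  proof (cases "a \<ge> 8 * \<epsilon> / 3")
    case True
    have "v \<ge> a + \<epsilon>" unfolding v_def using et True by linarith
    then have "p \<le> exp (-(a+\<epsilon>))" unfolding p_def by simp
    then show ?thesis using low by linarith
  next
    case False
    then have "a + \<epsilon> \<le> 1/4" using eps by linarith
    moreover have "1 + (-(a+\<epsilon>)) \<le> exp (-(a+\<epsilon>))" by (rule exp_ge_add_one_self)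
    ultimately show ?thesis using low by linarith
  qed
  have fin: "1 - \<delta> / (real T * exp \<epsilon>) \<le> measure (laplace (4/\<epsilon>) \<Otimes>\<^sub>M laplace (8/\<epsilon>)) {(L, \<nu>). L + \<nu> < t}"
    unfolding rhs by (rule order_trans[OF goal order_trans[OF prod P]])
  then show "measure (laplace (4/\<epsilon>) \<Otimes>\<^sub>M laplace (8/\<epsilon>))
           {(L, \<nu>). above_threshold_a1
                        (conc_score d \<tau> B (\<lambda>i. sgd_q gradf m x0 (Z i 1))) \<upsilon> L \<nu> = Bot}
         \<ge> 1 - \<delta> / (real T * exp \<epsilon>)"
    by (simp only: set_eq)
qed simp

end
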